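(* For every integer $s\ge 3$ there is a positive constant $c$ depending only on $s$ such that for all sufficiently large $n$, $$ f_{s,s+1}^{(2)}(n) \ge c\left(\frac{n\log n}{\log\log n}\right)^{1/2}. $$ That is, every $K_{s+1}$-free graph on $n$ vertices contains a set of at least $c\left(\frac{n\log n}{\log\log n}\right)^{1/2}$ vertices inducing no $K_s$.
   Context: For integers $2\le s<t$ and $n\ge 0$, $f_{s,t}^{(2)}(n)$ is the minimum, over all graphs $G$ on $n$ vertices containing no complete graph $K_t$, of the maximum size of a vertex subset $W\subseteq V(G)$ such that the induced subgraph $G[W]$ contains no $K_s$. All logarithms are natural logarithms. *)

theory Defs
  imports Complex_Main
begin

definition simple_graph :: "nat \<Rightarrow> (nat \<Rightarrow> nat \<Rightarrow> bool) \<Rightarrow> bool" where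
  "simple_graph n E \<longleftrightarrow> (\<forall>x y. E x y \<longrightarrow> E y x) \<and> (\<forall>x. \<not> E x x)
      \<and> (\<forall>x y. E x y \<longrightarrow> x < n \<and> y < n)"

definition is_clique :: "(nat \<Rightarrow> nat \<Rightarrow> bool) \<Rightarrow> nat set \<Rightarrow> bool" where
  "is_clique E K \<longleftrightarrow> (\<forall>x\<in>K. \<forall>y\<in>K. x \<noteq> y \<longrightarrow> E x y)"

definition contains_K :: "(nat \<Rightarrow> nat \<Rightarrow> bool) \<Rightarrow> nat set \<Rightarrow> nat \<Rightarrow> bool" where
  "contains_K E W t \<longleftrightarrow> (\<exists>K. K \<subseteq> W \<and> card K = t \<and> is_clique E K)"

definition max_Ks_free :: "nat \<Rightarrow> (nat \<Rightarrow> nat \<Rightarrow> bool) \<Rightarrow> nat \<Rightarrow> nat" where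
  "max_Ks_free n E s = Max {card W | W. W \<subseteq> {0..<n} \<and> \<not> contains_K E W s}"

definition f2 :: "nat \<Rightarrow> nat \<Rightarrow> nat \<Rightarrow> nat" where
  "f2 s t n = Min {max_Ks_free n E s | E. simple_graph n E \<and> \<not> contains_K E {0..<n} t}"

end

theory Submission
  imports Defs "HOL-Real_Asymp.Real_Asymp"
begin

definition indep :: "(nat \<Rightarrow> nat \<Rightarrow> bool) \<Rightarrow> nat set \<Rightarrow> bool" where
  "indep E T \<longleftrightarrow> (\<forall>x\<in>T. \<forall>y\<in>T. \<not> E x y)"

definition IS :: "(nat \<Rightarrow> nat \<Rightarrow> bool) \<Rightarrow> nat set \<Rightarrow> nat set set" where
  "IS E A = {T. T \<subseteq> A \<and> indep E T}"

lemma greedy: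
  assumes sym: "\<forall>x y. E x y \<longrightarrow> E y x" and irr: "\<forall>x. \<not> E x x"
    and "finite X" and "\<forall>v\<in>X. card {u\<in>X. E v u} \<le> d"
  shows "\<exists>T\<subseteq>X. indep E T \<and> card X \<le> card T * (d+1)"
  using assms(3,4)
proof (induction "card X" arbitrary: X rule: less_induct)
  case less
  show ?case
  proof (cases "X = {}")
    case True then show ?thesis by (auto simp: indep_def)
  next
    case False
    then obtain v where v: "v \<in> X" by auto
    define Y where "Y = insert v {u\<in>X. E v u}"
    define X' where "X' = X - Y"
    have fY: "finite Y" using less.prems(1) by (simp add: Y_def)
    have cY: "card Y \<le> d + 1"
    proof -
      have "card {u\<in>X. E v u} \<le> d" using less.prems v by auto
      moreover have "finite {u\<in>X. E v u}" using less.prems(1) by auto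
      ultimately show ?thesis unfolding Y_def by (simp add: card_insert_if)
    qed
    have XU: "X \<subseteq> X' \<union> Y" unfolding X'_def by auto
    have "card X \<le> card X' + card Y"
    proof -
      have "card X \<le> card (X' \<union> Y)" using XU fY less.prems(1) X'_def by (intro card_mono) auto
      also have "\<dots> \<le> card X' + card Y" by (rule card_Un_le)
      finally show ?thesis .
    qed
    have lt: "card X' < card X"
      unfolding X'_def Y_def using v less.prems(1)
    proof (intro psubset_card_mono)
      show "X - insert v {u \<in> X. E v u} \<subset> X" using v by blast
    qed simp
    have "\<forall>w\<in>X'. card {u\<in>X'. E w u} \<le> d"
    proof
      fix w assume "w \<in> X'"
      hence "w \<in> X" unfolding X'_def by auto
      hence "card {u\<in>X. E w u} \<le> d" using less.prems by auto
      moreover have "card {u\<in>X'. E w u} \<le> card {u\<in>X. E w u}"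
        by (rule card_mono) (use less.prems(1) X'_def in auto)
      ultimately show "card {u\<in>X'. E w u} \<le> d" by linarith
    qed
    moreover have "finite X'" using less.prems(1) X'_def by auto
    ultimately have "\<exists>T\<subseteq>X'. indep E T \<and> card X' \<le> card T * (d + 1)"
      using less.hyps[OF lt] by blast
    then obtain T' where T': "T' \<subseteq> X'" "indep E T'" "card X' \<le> card T' * (d+1)"
      by blast
    have vT: "v \<notin> T'" using T'(1) unfolding X'_def Y_def by auto
    have fT: "finite T'" using T'(1) less.prems(1) X'_def finite_subset by blast
    have "indep E (insert v T')"
      unfolding indep_def
    proof (intro ballI)
      fix x y assume "x \<in> insert v T'" "y \<in> insert v T'"
      then show "\<not> E x y"
        using T' irr sym unfolding indep_def X'_def Y_def by auto
    qed
    moreover have "insert v T' \<subseteq> X" using T'(1) v X'_def by auto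
    moreover have "card X \<le> card (insert v T') * (d+1)"
      using T'(3) vT fT \<open>card X \<le> card X' + card Y\<close> cY by simp
    ultimately show ?thesis by blast
  qed
qed

lemma ramsey:
  assumes sym: "\<forall>x y. E x y \<longrightarrow> E y x" and irr: "\<forall>x. \<not> E x x"
    and "finite X" and "t ^ r \<le> card X" and "\<not> contains_K E X (Suc r)"
  shows "\<exists>T\<subseteq>X. indep E T \<and> t \<le> card T"
  using assms(3-5)
proof (induction r arbitrary: X)
  case 0
  then obtain x where "x \<in> X" by fastforce
  then have "contains_K E X (Suc 0)" unfolding contains_K_def is_clique_def
    by (intro exI[of _ "{x}"]) auto
  then show ?case using 0 by simp
next
  case (Suc r)
  show ?case
  proof (cases "\<exists>v\<in>X. t ^ r \<le> card {u\<in>X. E v u}")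
    case True
    then obtain v where v: "v \<in> X" "t ^ r \<le> card {u\<in>X. E v u}" by blast
    define Y where "Y = {u\<in>X. E v u}"
    have "\<not> contains_K E Y (Suc r)"
    proof
      assume "contains_K E Y (Suc r)"
      then obtain K where K: "K \<subseteq> Y" "card K = Suc r" "is_clique E K"
        unfolding contains_K_def by blast
      have fK: "finite K" using K(2) card.infinite by fastforce
      have vK: "v \<notin> K" using K(1) irr unfolding Y_def by auto
      have "insert v K \<subseteq> X" using K(1) v unfolding Y_def by auto
      moreover have "card (insert v K) = Suc (Suc r)" using fK vK K(2) by simp
      moreover have "is_clique E (insert v K)"
        using K(1,3) sym unfolding is_clique_def Y_def by auto
      ultimately have "contains_K E X (Suc (Suc r))" unfolding contains_K_def by blast
      then show False using Suc.prems(3) by simp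
    qed
    moreover have "finite Y" using Suc.prems(1) Y_def by simp
    ultimately obtain T where "T \<subseteq> Y" "indep E T" "t \<le> card T"
      using Suc.IH[of Y] v(2) Y_def by blast
    then show ?thesis unfolding Y_def by blast
  next
    case False
    then have "\<forall>v\<in>X. card {u\<in>X. E v u} \<le> t ^ r - 1" by fastforce
    from greedy[OF sym irr Suc.prems(1) this] obtain T where
      T: "T \<subseteq> X" "indep E T" "card X \<le> card T * (t ^ r - 1 + 1)" by blast
    show ?thesis
    proof (cases "t = 0")
      case True then show ?thesis using T by auto
    next
      case False
      then have "t ^ r - 1 + 1 = t ^ r" by simp
      then have "card X \<le> card T * t ^ r" using T(3) by (simp only:)
      then have "t * t ^ r \<le> card T * t ^ r" using Suc.prems(2) by (metis power_Suc le_trans)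
      moreover have "t ^ r > 0" using False by simp
      ultimately have "t \<le> card T" by (meson mult_le_cancel2 not_le)
      then show ?thesis using T by blast
    qed
  qed
qed

lemma small_sets_card:
  assumes "finite X"
  shows "card {T. T \<subseteq> X \<and> card T \<le> k} \<le> (card X + 1) ^ k"
proof (induction k)
  case 0
  have sub0: "{T. T \<subseteq> X \<and> card T \<le> 0} \<subseteq> {{}}"
    using assms by (auto dest: finite_subset)
  then have "card {T. T \<subseteq> X \<and> card T \<le> 0} \<le> card {{}::'a set}" by (intro card_mono[OF _ sub0]) simp
  then show ?case by simp
next
  case (Suc k)
  define S where "S = {T. T \<subseteq> X \<and> card T \<le> k}"
  have fS: "finite S" unfolding S_def using assms by (rule rev_finite_subset[OF finite_Pow_iff[THEN iffD2]]) auto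
  have sub: "{T. T \<subseteq> X \<and> card T \<le> Suc k} \<subseteq> S \<union> (\<lambda>(a,T). insert a T) ` (X \<times> S)"
  proof
    fix T assume T: "T \<in> {T. T \<subseteq> X \<and> card T \<le> Suc k}"
    show "T \<in> S \<union> (\<lambda>(a,T). insert a T) ` (X \<times> S)"
    proof (cases "card T \<le> k")
      case True then show ?thesis using T S_def by auto
    next
      case False
      then have "card T = Suc k" using T by auto
      then obtain a where a: "a \<in> T" by (metis card.empty ex_in_conv nat.distinct(1))
      have fT: "finite T" using T assms finite_subset by auto
      have "card (T - {a}) = k" using a fT \<open>card T = Suc k\<close> by simp
      then have "(a, T - {a}) \<in> X \<times> S" using T a S_def by auto
      moreover have "T = insert a (T - {a})" using a by auto
      ultimately show ?thesis by (metis (no_types, lifting) UnI2 case_prod_conv image_eqI)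
    qed
  qed
  have "card {T. T \<subseteq> X \<and> card T \<le> Suc k} \<le> card (S \<union> (\<lambda>(a,T). insert a T) ` (X \<times> S))"
    using sub fS assms by (intro card_mono) auto
  also have "\<dots> \<le> card S + card ((\<lambda>(a,T). insert a T) ` (X \<times> S))" by (rule card_Un_le)
  also have "\<dots> \<le> card S + card (X \<times> S)" using card_image_le[of "X \<times> S" "\<lambda>(a,T). insert a T"] fS assms by simp
  also have "\<dots> = card S * (card X + 1)" by (simp add: card_cartesian_product)
  also have "\<dots> \<le> (card X + 1) ^ k * (card X + 1)" using Suc.IH S_def by (intro mult_right_mono) auto
  finally show ?case by (simp add: mult.commute)
qed

lemma finite_IS: "finite A \<Longrightarrow> finite (IS E A)"
  unfolding IS_def by (rule rev_finite_subset[of "Pow A"]) auto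

lemma ln2_half: "ln (2::real) \<ge> 1/2"
proof -
  have "ln (1/2::real) \<le> 1/2 - 1" by (rule ln_le_minus_one) simp
  then show ?thesis by (simp add: ln_div)
qed

lemma ln_le_2sqrt: assumes "(L::real) > 0" shows "ln L \<le> 2 * sqrt L"
proof -
  have "ln (sqrt L) \<le> sqrt L - 1" using assms by (intro ln_le_minus_one) simp
  moreover have "ln L = 2 * ln (sqrt L)" using assms by (simp add: ln_sqrt)
  ultimately show ?thesis by linarith
qed


lemma key:
  fixes E :: "nat \<Rightarrow> nat \<Rightarrow> bool" and X :: "nat set" and D L :: real and s :: nat
  assumes sym: "\<forall>x y. E x y \<longrightarrow> E y x" and irr: "\<forall>x. \<not> E x x"
    and fin: "finite X" and cX: "real (card X) \<le> D" and noK: "\<not> contains_K E X s"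
    and s1: "s \<ge> 1" and LD: "L = ln D" and Dpos: "D > 0"
    and H1: "ln L \<ge> 1" and H2: "L \<ge> 2^s" and H3: "L \<ge> 5184 * s^2"
    and H4: "L - ln 2 - ln L \<ge> L/4 + 2"
    and H5: "L^2/4 \<ge> L*(L+1)/12 + 2" and H6: "D \<ge> 2*L"
  shows "D + (\<Sum>T\<in>IS E X. real (card T)) \<ge> L/(36*s*ln L) * (1 + real (card (IS E X)))"
proof -
  define b where "b = L/(36*s*ln L)"
  define N where "N = real (card (IS E X))"
  define x where "x = real (card X)"
  define k where "k = nat \<lceil>2*b\<rceil>"
  have "(2::real)^s \<ge> 1" by simp
  then have L1: "L \<ge> 1" using H2 by linarith
  have lnLpos: "ln L > 0" using H1 by linarith
  have spos: "real s \<ge> 1" using s1 by simp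
  have b1: "b \<ge> 1"
  proof -
    have "ln L \<le> 2 * sqrt L" using L1 by (intro ln_le_2sqrt) simp
    have sq: "sqrt L \<ge> 72 * s" using H3 by (intro real_le_rsqrt) (simp add: power_mult_distrib)
    have "36 * s * ln L \<le> 36 * s * (2 * sqrt L)"
      using \<open>ln L \<le> 2 * sqrt L\<close> by (intro mult_left_mono) auto
    also have "\<dots> = (72 * s) * sqrt L" by simp
    also have "\<dots> \<le> sqrt L * sqrt L" using sq L1 by (intro mult_right_mono) auto
    also have "\<dots> = L" using L1 by simp
    finally have "36 * s * ln L \<le> L" .
    moreover have "36 * s * ln L > 0" using lnLpos spos by simp
    ultimately show ?thesis unfolding b_def by simp
  qed
  have bL: "b \<le> L/36"
  proof -
    have "real s * ln L \<ge> 1 * 1" using H1 spos by (intro mult_mono) auto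
    then have "36 * s * ln L \<ge> 36" by simp
    then show ?thesis unfolding b_def using L1 by (intro divide_left_mono) auto
  qed
  have k1: "2*b \<le> real k" unfolding k_def by linarith
  have k2: "real k \<le> 3*b" unfolding k_def using b1 by linarith
  have Npos: "N \<ge> 1"
  proof -
    have "{} \<in> IS E X" unfolding IS_def indep_def by auto
    then have "card (IS E X) \<noteq> 0" using finite_IS[OF fin] by auto
    then show ?thesis unfolding N_def by linarith
  qed
  show ?thesis
  proof (cases "b*(1+N) \<le> D")
    case True
    have "(\<Sum>T\<in>IS E X. real (card T)) \<ge> 0" by (rule sum_nonneg) simp
    then show ?thesis using True unfolding b_def N_def by linarith
  next
    case False
    have Dpos2: "D/b \<ge> 2" using H6 bL b1 L1 by (simp add: field_simps)
    have NL: "N > D/(2*b)"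
    proof -
      have "N > D/b - 1" using False b1 by (simp add: field_simps)
      moreover have "D/b - 1 \<ge> D/(2*b)" using Dpos2 by (simp add: field_simps)
      ultimately show ?thesis by linarith
    qed
    have ln3: "ln (3::real) \<le> 2" using ln_le_minus_one[of 3] by simp
    have x0: "x \<ge> 0" unfolding x_def by simp
    have lnpow: "ln (3 * (x+1)^k) = ln 3 + k * ln (x+1)" using x0 by (simp add: ln_mult ln_realpow)
    have Nbig: "N \<ge> 3 * (x+1)^k"
    proof (cases "x \<le> L^(2*s)")
      case True
      have "ln N \<ge> ln (D/(2*b))" using NL Dpos b1 Npos by (intro ln_le_cancel_iff[THEN iffD2]) auto
      also have "ln (D/(2*b)) = L - ln 2 - ln b" using Dpos b1 LD by (simp add: ln_div ln_mult)
      also have "ln b \<le> ln L" using b1 bL L1 by (intro ln_le_cancel_iff[THEN iffD2]) auto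
      then have "L - ln 2 - ln b \<ge> L - ln 2 - ln L" by linarith
      finally have lnN: "ln N \<ge> L/4 + 2" using H4 by linarith
      have "ln (x+1) \<le> ln (2 * L^(2*s))"
      proof (intro ln_le_cancel_iff[THEN iffD2])
        have "L^(2*s) \<ge> 1" using L1 by simp
        then show "x + 1 \<le> 2 * L^(2*s)" using True by linarith
      qed (use x0 L1 in auto)
      also have "\<dots> = ln 2 + 2*s*ln L" using L1 by (simp add: ln_mult ln_realpow)
      also have "\<dots> \<le> 3*s*ln L"
      proof -
        have "ln (2::real) \<le> 1" using ln_le_minus_one[of 2] by simp
        also have "1 \<le> s * ln L" using H1 spos by (metis mult_mono' mult_1 zero_le_one order_trans)
        finally show ?thesis by simp
      qed
      finally have lx: "ln (x+1) \<le> 3*s*ln L" .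
      have lx0: "ln (x+1) \<ge> 0" using x0 by simp
      have "k * ln (x+1) \<le> (3*b) * (3*s*ln L)"
        using k2 lx lx0 b1 by (intro mult_mono) auto
      also have "\<dots> = L/4" unfolding b_def using lnLpos spos by (simp add: field_simps)
      finally have "ln (3 * (x+1)^k) \<le> ln N" using lnpow lnN ln3 by linarith
      then show ?thesis using Npos x0 by (subst (asm) ln_le_cancel_iff) auto
    next
      case False
      define t where "t = nat \<lceil>L^2\<rceil>"
      have L2: "L^2 \<ge> 1" using L1 by simp
      have "real t = of_int \<lceil>L^2\<rceil>" unfolding t_def using L2 by simp
      also have "\<dots> \<le> L^2 + 1" by linarith
      finally have t1: "real t \<le> 2*L^2" using L2 by linarith
      have "(2::real)^(s-1) \<le> 2^s" by (intro power_increasing) auto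
      also have "\<dots> \<le> L" by (fact H2)
      also have "L \<le> L^2" using L1 by (simp add: power2_eq_square)
      finally have p2: "(2::real)^(s-1) \<le> L^2" .
      have "real (t^(s-1)) = (real t)^(s-1)" by simp
      also have "\<dots> \<le> (2*L^2)^(s-1)" using t1 by (intro power_mono) auto
      also have "\<dots> = 2^(s-1) * (L^2)^(s-1)" by (simp add: power_mult_distrib)
      also have "\<dots> \<le> L^2 * (L^2)^(s-1)" using p2 by (intro mult_right_mono) auto
      also have "\<dots> = L^(2*s)" using s1
        by (metis Suc_diff_1 less_le_trans power_Suc power_mult zero_less_one)
      also have "\<dots> \<le> x" using False by simp
      finally have "t^(s-1) \<le> card X" unfolding x_def by linarith
      moreover have "\<not> contains_K E X (Suc (s-1))" using noK s1 by simp
      ultimately obtain T where T: "T \<subseteq> X" "indep E T" "t \<le> card T"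
        using ramsey[OF sym irr fin] by blast
      have "Pow T \<subseteq> IS E X" using T unfolding IS_def indep_def by auto
      then have "card (Pow T) \<le> card (IS E X)" using finite_IS[OF fin] by (intro card_mono) auto
      moreover have "finite T" using T fin finite_subset by auto
      ultimately have "2 ^ card T \<le> card (IS E X)" by (simp add: card_Pow)
      moreover have "(2::nat)^t \<le> 2 ^ card T" using T by (intro power_increasing) auto
      ultimately have "2^t \<le> card (IS E X)" by linarith
      then have "real (2^t) \<le> real (card (IS E X))" by (simp only: of_nat_le_iff)
      then have "(2::real)^t \<le> N" unfolding N_def by simp
      then have "ln ((2::real)^t) \<le> ln N" using Npos by (intro ln_le_cancel_iff[THEN iffD2]) auto
      then have "t * ln 2 \<le> ln N" by (simp add: ln_realpow)
      moreover have "L^2 \<le> real t" unfolding t_def by linarith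
      moreover have "real t * (1/2) \<le> real t * ln 2" using ln2_half by (intro mult_left_mono) auto
      ultimately have lnN: "L^2 * (1/2) \<le> ln N" by linarith
      have D1: "D \<ge> 1" using H6 L1 by linarith
      have "ln (x+1) \<le> ln (2*D)" using x0 cX D1 unfolding x_def by (intro ln_le_cancel_iff[THEN iffD2]) auto
      also have "\<dots> = ln 2 + L" using Dpos LD by (simp add: ln_mult)
      also have "\<dots> \<le> L + 1" using ln_le_minus_one[of 2] by simp
      finally have lx: "ln (x+1) \<le> L + 1" .
      have lx0: "ln (x+1) \<ge> 0" using x0 by simp
      have "k * ln (x+1) \<le> (3*(L/36)) * (L+1)"
        using k2 bL lx lx0 b1 by (intro mult_mono) auto
      then have "ln (3 * (x+1)^k) \<le> L*(L+1)/12 + 2" using lnpow ln3 by simp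
      moreover have "L^2 \<ge> 0" by simp
      ultimately have "ln (3 * (x+1)^k) \<le> ln N" using H5 lnN by linarith
      then show ?thesis using Npos x0 by (subst (asm) ln_le_cancel_iff) auto
    qed
    define A where "A = {T\<in>IS E X. k \<le> card T}"
    define B where "B = {T\<in>IS E X. card T < k}"
    have fI: "finite (IS E X)" using finite_IS[OF fin] .
    have sP: "{T. T \<subseteq> X \<and> card T \<le> k} \<subseteq> Pow X" by blast
    have fP: "finite {T. T \<subseteq> X \<and> card T \<le> k}" using finite_subset[OF sP] fin by blast
    have sB: "B \<subseteq> {T. T \<subseteq> X \<and> card T \<le> k}" unfolding B_def IS_def by auto
    have "card B \<le> card {T. T \<subseteq> X \<and> card T \<le> k}" using card_mono[OF fP sB] .
    also have "\<dots> \<le> (card X + 1)^k" using small_sets_card[OF fin] .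
    finally have "real (card B) \<le> real ((card X + 1)^k)" by (simp only: of_nat_le_iff)
    then have cB: "real (card B) \<le> (x+1)^k" unfolding x_def by (simp add: add.commute)
    have "IS E X = A \<union> B" "A \<inter> B = {}" unfolding A_def B_def by auto
    then have "card (IS E X) = card A + card B" using fI
      by (simp add: card_Un_disjoint)
    then have cA: "real (card A) \<ge> N - (x+1)^k" using cB unfolding N_def by simp
    have "(\<Sum>T\<in>IS E X. real (card T)) \<ge> (\<Sum>T\<in>A. real (card T))"
      using fI by (intro sum_mono2) (auto simp: A_def)
    moreover have "(\<Sum>T\<in>A. real (card T)) \<ge> (\<Sum>T\<in>A. real k)"
      by (intro sum_mono) (auto simp: A_def)
    moreover have "(\<Sum>T\<in>A. real k) = real k * card A" by simp
    moreover have "real k * card A \<ge> (2*b) * (N - (x+1)^k)"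
    proof (rule mult_mono)
      show "N - (x+1)^k \<le> real (card A)" by (fact cA)
      show "0 \<le> N - (x+1)^k" using Nbig x0 by (smt (verit) zero_le_power)
    qed (use k1 in auto)
    ultimately have S: "(\<Sum>T\<in>IS E X. real (card T)) \<ge> (2*b) * (N - (x+1)^k)" by linarith
    have "(x+1)^k \<ge> 1" using x0 by simp
    then have N3: "N \<ge> 3" using Nbig by linarith
    have "(2*b) * (N - (x+1)^k) \<ge> (2*b) * (N - N/3)" using Nbig b1 by (intro mult_left_mono) auto
    moreover have "(2*b) * (N - N/3) \<ge> b * (1 + N)" using N3 b1 by (simp add: algebra_simps)
    ultimately have "(\<Sum>T\<in>IS E X. real (card T)) \<ge> b * (1 + N)" using S by linarith
    then show ?thesis using Dpos unfolding b_def N_def by linarith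
  qed
qed


lemma per_vertex:
  fixes E :: "nat \<Rightarrow> nat \<Rightarrow> bool" and D L :: real and s n v :: nat
  assumes sg: "simple_graph n E" and noK: "\<not> contains_K E {0..<n} (s+1)"
    and vV: "v < n"
    and deg: "real (card {u. E v u}) \<le> D"
    and s1: "s \<ge> 1" and LD: "L = ln D" and Dpos: "D > 0"
    and H1: "ln L \<ge> 1" and H2: "L \<ge> 2^s" and H3: "L \<ge> 5184 * s^2"
    and H4: "L - ln 2 - ln L \<ge> L/4 + 2"
    and H5: "L^2/4 \<ge> L*(L+1)/12 + 2" and H6: "D \<ge> 2*L"
  shows "(\<Sum>I\<in>IS E {0..<n}. D * of_bool (v \<in> I) + real (card (I \<inter> {u. E v u})))
          \<ge> L/(36*s*ln L) * real (card (IS E {0..<n}))"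
proof -
  define V where "V = {0..<n}"
  define Nv where "Nv = {u. E v u}"
  define b where "b = L/(36*s*ln L)"
  define g where "g = (\<lambda>I. D * of_bool (v \<in> I) + real (card (I \<inter> Nv)))"
  define h where "h = (\<lambda>I. I - insert v Nv)"
  have sym: "\<forall>x y. E x y \<longrightarrow> E y x" and irr: "\<forall>x. \<not> E x x"
    and inV: "\<forall>x y. E x y \<longrightarrow> x < n \<and> y < n"
    using sg unfolding simple_graph_def by auto
  have NvV: "Nv \<subseteq> V" using inV unfolding Nv_def V_def by auto
  have vNv: "v \<notin> Nv" using irr unfolding Nv_def by auto
  have fV: "finite V" unfolding V_def by simp
  have fNv: "finite Nv" using finite_subset[OF NvV fV] .
  have fI: "finite (IS E V)" using finite_IS[OF fV] .
  have fiber: "(\<Sum>I\<in>{I\<in>IS E V. h I = J}. g I) \<ge> b * card {I\<in>IS E V. h I = J}"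
    if J: "J \<in> h ` IS E V" for J
  proof -
    obtain I0 where I0: "I0 \<in> IS E V" "J = h I0" using J by blast
    have JV: "J \<subseteq> V" and Jind: "indep E J" and Jdisj: "J \<inter> insert v Nv = {}"
      using I0 unfolding IS_def h_def indep_def by auto
    define X where "X = {u\<in>Nv. \<forall>j\<in>J. \<not> E u j}"
    have XNv: "X \<subseteq> Nv" unfolding X_def by auto
    have fX: "finite X" using finite_subset[OF XNv fNv] .
    have F: "{I\<in>IS E V. h I = J} = insert (insert v J) ((\<lambda>T. J \<union> T) ` IS E X)"
    proof (intro equalityI subsetI)
      fix I assume "I \<in> {I\<in>IS E V. h I = J}"
      then have I: "I \<subseteq> V" "indep E I" "I - insert v Nv = J" unfolding IS_def h_def by auto
      show "I \<in> insert (insert v J) ((\<lambda>T. J \<union> T) ` IS E X)"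
      proof (cases "v \<in> I")
        case True
        have "I \<inter> Nv = {}" using True I(2) unfolding indep_def Nv_def by auto
        then have "I = insert v J" using True I(3) by auto
        then show ?thesis by simp
      next
        case False
        have "I \<inter> Nv \<in> IS E X" using I unfolding IS_def X_def indep_def by auto
        moreover have "I = J \<union> (I \<inter> Nv)" using False I(3) by auto
        ultimately show ?thesis by blast
      qed
    next
      fix I assume "I \<in> insert (insert v J) ((\<lambda>T. J \<union> T) ` IS E X)"
      then consider "I = insert v J" | T where "T \<in> IS E X" "I = J \<union> T" by blast
      then show "I \<in> {I\<in>IS E V. h I = J}"
      proof cases
        case 1
        have "insert v J \<subseteq> V" using JV vV V_def by auto
        moreover have "indep E (insert v J)"
          using Jind Jdisj sym irr unfolding indep_def Nv_def by blast
        moreover have "h (insert v J) = J" using Jdisj unfolding h_def by auto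
        ultimately show ?thesis using 1 unfolding IS_def by auto
      next
        case 2
        have T: "T \<subseteq> X" "indep E T" using 2(1) unfolding IS_def by auto
        have "J \<union> T \<subseteq> V" using JV T(1) XNv NvV by auto
        moreover have "indep E (J \<union> T)"
          using Jind T sym unfolding indep_def X_def by blast
        moreover have "h (J \<union> T) = J" using Jdisj T(1) XNv unfolding h_def by auto
        ultimately show ?thesis using 2 unfolding IS_def by auto
      qed
    qed
    have fIX: "finite (IS E X)" using finite_IS[OF fX] .
    have inj: "inj_on (\<lambda>T. J \<union> T) (IS E X)"
    proof (rule inj_onI)
      fix T1 T2 assume "T1 \<in> IS E X" "T2 \<in> IS E X" "J \<union> T1 = J \<union> T2"
      moreover have "J \<inter> T1 = {}" "J \<inter> T2 = {}" using calculation(1,2) Jdisj XNv unfolding IS_def by auto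
      ultimately show "T1 = T2" by blast
    qed
    have notin: "insert v J \<notin> (\<lambda>T. J \<union> T) ` IS E X"
    proof
      assume "insert v J \<in> (\<lambda>T. J \<union> T) ` IS E X"
      then obtain T where "T \<in> IS E X" "insert v J = J \<union> T" by blast
      then have "v \<in> T" using Jdisj by auto
      then show False using \<open>T \<in> IS E X\<close> XNv vNv unfolding IS_def by auto
    qed
    have sumF: "(\<Sum>I\<in>{I\<in>IS E V. h I = J}. g I) = g (insert v J) + (\<Sum>T\<in>IS E X. g (J \<union> T))"
      unfolding F using notin fIX inj by (simp add: sum.reindex)
    have cardF: "card {I\<in>IS E V. h I = J} = 1 + card (IS E X)"
      unfolding F using notin fIX inj by (simp add: card_image)
    have g1: "g (insert v J) \<ge> D" unfolding g_def by simp
    have g2: "g (J \<union> T) = real (card T)" if "T \<in> IS E X" for T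
    proof -
      have "v \<notin> J \<union> T" using that Jdisj XNv vNv unfolding IS_def by auto
      moreover have "(J \<union> T) \<inter> Nv = T" using that Jdisj XNv unfolding IS_def by auto
      ultimately show ?thesis unfolding g_def by simp
    qed
    have noKX: "\<not> contains_K E X s"
    proof
      assume "contains_K E X s"
      then obtain K where K: "K \<subseteq> X" "card K = s" "is_clique E K"
        unfolding contains_K_def by blast
      have fK: "finite K" using K(2) s1 card.infinite by fastforce
      have vK: "v \<notin> K" using K(1) XNv vNv by auto
      have "insert v K \<subseteq> {0..<n}" using K(1) XNv NvV vV V_def by auto
      moreover have "card (insert v K) = s + 1" using fK vK K(2) by simp
      moreover have "is_clique E (insert v K)"
        using K(1,3) XNv sym unfolding is_clique_def Nv_def by blast
      ultimately show False using noK unfolding contains_K_def by blast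
    qed
    have cX: "real (card X) \<le> D"
    proof -
      have "card X \<le> card Nv" using card_mono[OF fNv XNv] .
      then show ?thesis using deg unfolding Nv_def by linarith
    qed
    have KEY: "D + (\<Sum>T\<in>IS E X. real (card T)) \<ge> b * (1 + real (card (IS E X)))"
      using key[OF sym irr fX cX noKX s1 LD Dpos H1 H2 H3 H4 H5 H6] unfolding b_def .
    have "(\<Sum>T\<in>IS E X. g (J \<union> T)) = (\<Sum>T\<in>IS E X. real (card T))"
      using g2 by (intro sum.cong) auto
    then show ?thesis using sumF cardF g1 KEY by simp
  qed
  have "(\<Sum>I\<in>IS E V. g I) = (\<Sum>J\<in>h ` IS E V. \<Sum>I\<in>{I\<in>IS E V. h I = J}. g I)"
    using fI by (intro sum.group[symmetric]) auto
  also have "\<dots> \<ge> (\<Sum>J\<in>h ` IS E V. b * card {I\<in>IS E V. h I = J})"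
    using fiber by (intro sum_mono) auto
  also have "(\<Sum>J\<in>h ` IS E V. b * card {I\<in>IS E V. h I = J}) = b * (\<Sum>J\<in>h ` IS E V. real (card {I\<in>IS E V. h I = J}))"
    by (simp add: sum_distrib_left)
  also have "(\<Sum>J\<in>h ` IS E V. real (card {I\<in>IS E V. h I = J})) = real (card (IS E V))"
  proof -
    have "(\<Sum>J\<in>h ` IS E V. real (card {I\<in>IS E V. h I = J})) = (\<Sum>J\<in>h ` IS E V. \<Sum>I\<in>{I\<in>IS E V. h I = J}. (1::real))"
      by simp
    also have "\<dots> = (\<Sum>I\<in>IS E V. (1::real))" using fI by (intro sum.group) auto
    finally show ?thesis by simp
  qed
  finally show ?thesis unfolding g_def V_def Nv_def b_def by simp
qed


lemma indep_big:
  fixes E :: "nat \<Rightarrow> nat \<Rightarrow> bool" and D L :: real and s n :: nat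
  assumes sg: "simple_graph n E" and noK: "\<not> contains_K E {0..<n} (s+1)"
    and deg: "\<forall>v<n. real (card {u. E v u}) \<le> D"
    and s1: "s \<ge> 1" and LD: "L = ln D" and Dpos: "D > 0"
    and H1: "ln L \<ge> 1" and H2: "L \<ge> 2^s" and H3: "L \<ge> 5184 * s^2"
    and H4: "L - ln 2 - ln L \<ge> L/4 + 2"
    and H5: "L^2/4 \<ge> L*(L+1)/12 + 2" and H6: "D \<ge> 2*L"
  shows "\<exists>I. I \<subseteq> {0..<n} \<and> indep E I \<and> real (card I) * (2*D) \<ge> n * (L/(36*s*ln L))"
proof -
  define V where "V = {0..<n}"
  define b where "b = L/(36*s*ln L)"
  define G where "G = (\<lambda>v I. D * of_bool (v \<in> I) + real (card (I \<inter> {u. E v u})))"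
  have sym: "\<forall>x y. E x y \<longrightarrow> E y x" and inV: "\<forall>x y. E x y \<longrightarrow> x < n \<and> y < n"
    using sg unfolding simple_graph_def by auto
  have fV: "finite V" unfolding V_def by simp
  have fI: "finite (IS E V)" using finite_IS[OF fV] .
  have ne: "IS E V \<noteq> {}" unfolding IS_def indep_def by auto
  have "(\<Sum>v\<in>V. \<Sum>I\<in>IS E V. G v I) \<ge> (\<Sum>v\<in>V. b * real (card (IS E V)))"
    using per_vertex[OF sg noK _ _ s1 LD Dpos H1 H2 H3 H4 H5 H6] deg
    unfolding G_def V_def b_def by (intro sum_mono) auto
  then have lower: "(\<Sum>I\<in>IS E V. \<Sum>v\<in>V. G v I) \<ge> n * b * real (card (IS E V))"
    unfolding V_def by (simp add: sum.swap[of _ "IS E _"] mult.assoc)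
  have upper: "(\<Sum>v\<in>V. G v I) \<le> 2 * D * real (card I)" if I: "I \<in> IS E V" for I
  proof -
    have IV: "I \<subseteq> V" using I unfolding IS_def by auto
    have fII: "finite I" using finite_subset[OF IV fV] .
    have a: "(\<Sum>v\<in>V. D * of_bool (v \<in> I)) = D * real (card I)"
    proof -
      have "(\<Sum>v\<in>V. D * of_bool (v \<in> I)) = D * (\<Sum>v\<in>V. of_bool (v \<in> I))"
        by (simp add: sum_distrib_left)
      also have "(\<Sum>v\<in>V. of_bool (v \<in> I) :: real) = real (card (V \<inter> {v. v \<in> I}))"
        using fV by simp
      also have "V \<inter> {v. v \<in> I} = I" using IV by auto
      finally show ?thesis .
    qed
    have c: "real (card (I \<inter> {u. E v u})) = (\<Sum>u\<in>I. of_bool (E v u))" for v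
      using fII by (simp add: Int_def)
    have "(\<Sum>v\<in>V. real (card (I \<inter> {u. E v u}))) = (\<Sum>v\<in>V. \<Sum>u\<in>I. of_bool (E v u))"
      using c by simp
    also have "\<dots> = (\<Sum>u\<in>I. \<Sum>v\<in>V. of_bool (E v u))" by (rule sum.swap)
    also have "\<dots> = (\<Sum>u\<in>I. real (card {v. E u v}))"
    proof (rule sum.cong)
      fix u assume "u \<in> I"
      have "(\<Sum>v\<in>V. of_bool (E v u) :: real) = real (card (V \<inter> {v. E v u}))" using fV by simp
      also have "V \<inter> {v. E v u} = {v. E u v}" using sym inV unfolding V_def by auto
      finally show "(\<Sum>v\<in>V. of_bool (E v u)) = real (card {v. E u v})" .
    qed simp
    also have "\<dots> \<le> (\<Sum>u\<in>I. D)" using deg IV unfolding V_def by (intro sum_mono) auto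
    also have "\<dots> = D * real (card I)" by simp
    finally have b: "(\<Sum>v\<in>V. real (card (I \<inter> {u. E v u}))) \<le> D * real (card I)" .
    have "(\<Sum>v\<in>V. G v I) = (\<Sum>v\<in>V. D * of_bool (v \<in> I)) + (\<Sum>v\<in>V. real (card (I \<inter> {u. E v u})))"
      unfolding G_def by (simp add: sum.distrib)
    then show ?thesis using a b by simp
  qed
  show ?thesis
  proof (rule ccontr)
    assume "\<not> ?thesis"
    then have lt: "\<forall>I\<in>IS E V. 2 * D * real (card I) < n * b"
      unfolding IS_def V_def b_def by (auto simp: mult.commute)
    have "(\<Sum>I\<in>IS E V. \<Sum>v\<in>V. G v I) \<le> (\<Sum>I\<in>IS E V. 2 * D * real (card I))"
      using upper by (intro sum_mono) auto
    also have "\<dots> < (\<Sum>I\<in>IS E V. n * b)"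
      using lt fI ne by (intro sum_strict_mono) auto
    also have "\<dots> = n * b * real (card (IS E V))" by simp
    finally show False using lower by simp
  qed
qed


lemma mk_set_fin: "finite {card W | W. W \<subseteq> {0..<n} \<and> \<not> contains_K E W s}"
proof -
  have "{card W | W. W \<subseteq> {0..<n} \<and> \<not> contains_K E W s} \<subseteq> {..n}"
    by (auto dest: card_mono[rotated] simp del: )
  then show ?thesis by (rule finite_subset) simp
qed

lemma mk_ge:
  assumes "W \<subseteq> {0..<n}" "\<not> contains_K E W s"
  shows "card W \<le> max_Ks_free n E s"
  unfolding max_Ks_free_def using assms mk_set_fin by (intro Max_ge) auto

lemma mk_le:
  assumes "s \<ge> 1"
  shows "max_Ks_free n E s \<le> n"
proof -
  have "{} \<subseteq> {0..<n}" "\<not> contains_K E {} s" using assms unfolding contains_K_def by auto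
  then have ne: "{card W | W. W \<subseteq> {0..<n} \<and> \<not> contains_K E W s} \<noteq> {}" by blast
  have "\<forall>a\<in>{card W | W. W \<subseteq> {0..<n} \<and> \<not> contains_K E W s}. a \<le> n"
    using card_mono[of "{0..<n}"] by auto
  then show ?thesis unfolding max_Ks_free_def using Max_le_iff[OF mk_set_fin ne] by blast
qed

lemma f2_attained:
  assumes "s \<ge> 1" "t \<ge> 2"
  shows "\<exists>E. simple_graph n E \<and> \<not> contains_K E {0..<n} t \<and> f2 s t n = max_Ks_free n E s"
proof -
  define S where "S = {max_Ks_free n E s | E. simple_graph n E \<and> \<not> contains_K E {0..<n} t}"
  have "S \<subseteq> {..n}" using mk_le[OF assms(1)] unfolding S_def by auto
  then have fS: "finite S" by (rule finite_subset) simp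
  have g: "simple_graph n (\<lambda>_ _. False)" unfolding simple_graph_def by simp
  have "\<not> contains_K (\<lambda>_ _. False) {0..<n} t"
  proof
    assume "contains_K (\<lambda>_ _. False) {0..<n} t"
    then obtain K where K: "card K = t" "is_clique (\<lambda>_ _. False) K" unfolding contains_K_def by blast
    then have "card K \<ge> 2" using assms by simp
    then obtain x y where "x \<in> K" "y \<in> K" "x \<noteq> y"
      by (metis card_2_iff' card_le_Suc_iff numeral_2_eq_2 obtain_subset_with_card_n subset_iff)
    then show False using K(2) unfolding is_clique_def by blast
  qed
  then have neS: "S \<noteq> {}" using g unfolding S_def by blast
  have "Min S \<in> S" using fS neS by (rule Min_in)
  then show ?thesis unfolding S_def f2_def by auto
qed


definition Pcond :: "nat \<Rightarrow> real \<Rightarrow> bool" where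
  "Pcond s L \<longleftrightarrow> ln L \<ge> 1 \<and> L \<ge> 2^s \<and> L \<ge> 5184 * s^2 \<and> L - ln 2 - ln L \<ge> L/4 + 2 \<and>
     L^2/4 \<ge> L*(L+1)/12 + 2"

lemma analytic:
  fixes s :: nat
  shows "eventually (\<lambda>n::nat. Pcond s (ln (sqrt (real n * ln (real n) / ln (ln (real n))))) \<and>
     sqrt (real n * ln (real n) / ln (ln (real n))) \<ge> 2 * ln (sqrt (real n * ln (real n) / ln (ln (real n)))) \<and>
     sqrt (real n * ln (real n) / ln (ln (real n))) > 0 \<and>
     ln (sqrt (real n * ln (real n) / ln (ln (real n)))) \<ge> ln (real n) / 2 \<and>
     sqrt (real n * ln (real n) / ln (ln (real n))) \<le> real n \<and> ln (ln (real n)) > 0) sequentially"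
proof -
  have e1: "eventually (Pcond s) at_top" unfolding Pcond_def
  proof (intro eventually_conj)
    show "eventually (\<lambda>L::real. ln L \<ge> 1) at_top" by real_asymp
    show "eventually (\<lambda>L::real. L \<ge> 2^s) at_top" by (rule eventually_ge_at_top)
    show "eventually (\<lambda>L::real. L \<ge> 5184 * s^2) at_top" by (rule eventually_ge_at_top)
    show "eventually (\<lambda>L::real. L - ln 2 - ln L \<ge> L/4 + 2) at_top" by real_asymp
    show "eventually (\<lambda>L::real. L^2/4 \<ge> L*(L+1)/12 + 2) at_top" by real_asymp
  qed
  have a: "eventually (\<lambda>D. Pcond s (ln D)) at_top"
    using eventually_compose_filterlim[OF e1 ln_at_top] .
  have b1: "eventually (\<lambda>D::real. D \<ge> 2 * ln D) at_top" by real_asymp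
  have b2: "eventually (\<lambda>D::real. D > 0) at_top" by real_asymp
  have Q: "eventually (\<lambda>D. Pcond s (ln D) \<and> D \<ge> 2 * ln D \<and> D > 0) at_top"
    using a b1 b2 by eventually_elim auto
  have lim: "filterlim (\<lambda>x::real. sqrt (x * ln x / ln (ln x))) at_top at_top" by real_asymp
  have c: "eventually (\<lambda>x. Pcond s (ln (sqrt (x * ln x / ln (ln x)))) \<and>
     sqrt (x * ln x / ln (ln x)) \<ge> 2 * ln (sqrt (x * ln x / ln (ln x))) \<and> sqrt (x * ln x / ln (ln x)) > 0) at_top"
    using eventually_compose_filterlim[OF Q lim] .
  have d1: "eventually (\<lambda>x::real. ln (sqrt (x * ln x / ln (ln x))) \<ge> ln x / 2) at_top" by real_asymp
  have d2: "eventually (\<lambda>x::real. sqrt (x * ln x / ln (ln x)) \<le> x) at_top" by real_asymp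
  have d3: "eventually (\<lambda>x::real. ln (ln x) > 0) at_top" by real_asymp
  have all: "eventually (\<lambda>x. Pcond s (ln (sqrt (x * ln x / ln (ln x)))) \<and>
     sqrt (x * ln x / ln (ln x)) \<ge> 2 * ln (sqrt (x * ln x / ln (ln x))) \<and> sqrt (x * ln x / ln (ln x)) > 0 \<and>
     ln (sqrt (x * ln x / ln (ln x))) \<ge> ln x / 2 \<and> sqrt (x * ln x / ln (ln x)) \<le> x \<and> ln (ln x) > 0) at_top"
    using c d1 d2 d3 by eventually_elim auto
  show ?thesis using eventually_compose_filterlim[OF all filterlim_real_sequentially] .
qed

theorem mainTheorem3:
  fixes s :: nat
  assumes "s \<ge> 3"
  shows "\<exists>c::real. c > 0 \<and> (\<exists>N. \<forall>n\<ge>N.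
           real (f2 s (s + 1) n) \<ge> c * sqrt (real n * ln (real n) / ln (ln (real n))))"
proof -
  have s1: "s \<ge> 1" and s2: "s \<ge> 2" using assms by auto
  define c :: real where "c = 1 / (144 * s)"
  obtain N where N: "\<And>n. n \<ge> N \<Longrightarrow> Pcond s (ln (sqrt (real n * ln (real n) / ln (ln (real n))))) \<and>
     sqrt (real n * ln (real n) / ln (ln (real n))) \<ge> 2 * ln (sqrt (real n * ln (real n) / ln (ln (real n)))) \<and>
     sqrt (real n * ln (real n) / ln (ln (real n))) > 0 \<and>
     ln (sqrt (real n * ln (real n) / ln (ln (real n)))) \<ge> ln (real n) / 2 \<and>
     sqrt (real n * ln (real n) / ln (ln (real n))) \<le> real n \<and> ln (ln (real n)) > 0"
    using analytic[of s] unfolding eventually_sequentially by blast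
  have "c > 0" unfolding c_def using s1 by simp
  moreover have "\<forall>n\<ge>N. real (f2 s (s + 1) n) \<ge> c * sqrt (real n * ln (real n) / ln (ln (real n)))"
  proof (intro allI impI)
    fix n assume "n \<ge> N"
    define D where "D = sqrt (real n * ln (real n) / ln (ln (real n)))"
    define L where "L = ln D"
    have P: "Pcond s L" and H6: "D \<ge> 2 * L" and Dpos: "D > 0" and Lbig: "L \<ge> ln (real n) / 2"
      and Dn: "D \<le> real n" and mpos: "ln (ln (real n)) > 0"
      using N[OF \<open>n \<ge> N\<close>] unfolding D_def L_def by auto
    have H1: "ln L \<ge> 1" and H2: "L \<ge> 2^s" and H3: "L \<ge> 5184 * s^2"
      and H4: "L - ln 2 - ln L \<ge> L/4 + 2" and H5: "L^2/4 \<ge> L*(L+1)/12 + 2"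
      using P unfolding Pcond_def by auto
    obtain E where E: "simple_graph n E" "\<not> contains_K E {0..<n} (s+1)" "f2 s (s+1) n = max_Ks_free n E s"
      using f2_attained[OF s1, of "s+1" n] s1 by auto
    have sym: "\<forall>x y. E x y \<longrightarrow> E y x" and irr: "\<forall>x. \<not> E x x"
      and inV: "\<forall>x y. E x y \<longrightarrow> x < n \<and> y < n"
      using E(1) unfolding simple_graph_def by auto
    have c1: "c \<le> 1" unfolding c_def using s1 by simp
    have "\<exists>W. W \<subseteq> {0..<n} \<and> \<not> contains_K E W s \<and> real (card W) \<ge> c * D"
    proof (cases "\<exists>v<n. real (card {u. E v u}) > D")
      case True
      then obtain v where v: "v < n" "real (card {u. E v u}) > D" by blast
      have "{u. E v u} \<subseteq> {0..<n}" using inV by auto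
      moreover have "\<not> contains_K E {u. E v u} s"
      proof
        assume "contains_K E {u. E v u} s"
        then obtain K where K: "K \<subseteq> {u. E v u}" "card K = s" "is_clique E K"
          unfolding contains_K_def by blast
        have fK: "finite K" using K(2) s1 card.infinite by fastforce
        have vK: "v \<notin> K" using K(1) irr by auto
        have "insert v K \<subseteq> {0..<n}" using K(1) inV v by auto
        moreover have "card (insert v K) = s + 1" using fK vK K(2) by simp
        moreover have "is_clique E (insert v K)"
          using K(1,3) sym unfolding is_clique_def by blast
        ultimately show False using E(2) unfolding contains_K_def by blast
      qed
      moreover have "c * D \<le> real (card {u. E v u})"
      proof -
        have "c * D \<le> 1 * D" using c1 Dpos by (intro mult_right_mono) auto
        then show ?thesis using v(2) by linarith
      qed
      ultimately show ?thesis by blast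
    next
      case False
      then have deg: "\<forall>v<n. real (card {u. E v u}) \<le> D" by auto
      obtain I where I: "I \<subseteq> {0..<n}" "indep E I" "real (card I) * (2*D) \<ge> n * (L/(36*s*ln L))"
        using indep_big[OF E(1) E(2) deg s1 L_def Dpos H1 H2 H3 H4 H5 H6] by blast
      have noKI: "\<not> contains_K E I s"
      proof
        assume "contains_K E I s"
        then obtain K where K: "K \<subseteq> I" "card K = s" "is_clique E K"
          unfolding contains_K_def by blast
        then have "card K \<ge> 2" using s2 by simp
        then obtain x y where "x \<in> K" "y \<in> K" "x \<noteq> y"
          by (metis card_2_iff' card_le_Suc_iff numeral_2_eq_2 obtain_subset_with_card_n subset_iff)
        then show False using K I(2) unfolding is_clique_def indep_def by blast
      qed
      define l where "l = ln (real n)"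
      define m where "m = ln (ln (real n))"
      have "(2::real)^s \<ge> 1" by simp
      then have Lpos: "L > 0" using H2 by linarith
      have lnLpos: "ln L > 0" using H1 by linarith
      have "real n > 1" using Dn H6 Lpos H2 \<open>(2::real)^s \<ge> 1\<close> by linarith
      then have lpos: "l > 0" unfolding l_def by simp
      have "L \<le> l" unfolding L_def l_def using Dn Dpos by (simp)
      then have lnLm: "ln L \<le> m" unfolding m_def l_def using Lpos by simp
      have spos: "real s > 0" using s1 by simp
      have "l / (72 * s * m) \<le> L / (36 * s * ln L)"
      proof -
        have "l / (72 * s * m) = (l/2) / (36 * s * m)" by (simp add: field_simps)
        also have "\<dots> \<le> L / (36 * s * m)" using Lbig spos mpos unfolding l_def m_def
          by (intro divide_right_mono) auto
        also have "\<dots> \<le> L / (36 * s * ln L)"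
        proof (rule divide_left_mono)
          show "36 * s * ln L \<le> 36 * s * m" using lnLm spos by (intro mult_left_mono) auto
          show "0 \<le> L" using Lpos by simp
          have "36 * s * ln L > 0" using lnLpos spos by simp
          moreover have "36 * s * m > 0" using lnLpos lnLm spos by simp
          ultimately show "0 < 36 * s * m * (36 * s * ln L)" by (metis mult_pos_pos)
        qed
        finally show ?thesis .
      qed
      then have "n * (l / (72 * s * m)) \<le> n * (L / (36 * s * ln L))" by (intro mult_left_mono) auto
      moreover have D2: "D^2 = n * l / m" unfolding D_def l_def m_def using lpos mpos unfolding l_def m_def by simp
      moreover have "D^2/(72*s) = n * (l/(72*s*m))" unfolding D2 by simp
      ultimately have X: "D^2 / (72 * s) \<le> real (card I) * (2*D)" using I(3) by linarith
      have "D * (D / (144 * s)) = (D^2 / (72 * s)) / 2" by (simp add: power2_eq_square)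
      also have "\<dots> \<le> (real (card I) * (2*D)) / 2" using X by (intro divide_right_mono) auto
      also have "\<dots> = D * real (card I)" by simp
      finally have "D * (D / (144 * s)) \<le> D * real (card I)" .
      then have "D / (144 * s) \<le> real (card I)" using Dpos by (rule mult_left_le_imp_le)
      then have "c * D \<le> real (card I)" unfolding c_def by simp
      then show ?thesis using I(1) noKI by blast
    qed
    then obtain W where W: "W \<subseteq> {0..<n}" "\<not> contains_K E W s" "real (card W) \<ge> c * D" by blast
    have "card W \<le> max_Ks_free n E s" using mk_ge[OF W(1,2)] .
    then have "real (card W) \<le> real (f2 s (s+1) n)" using E(3) by simp
    then show "real (f2 s (s + 1) n) \<ge> c * sqrt (real n * ln (real n) / ln (ln (real n)))"
      using W(3) unfolding D_def by linarith
  qed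
  ultimately show ?thesis by blast
qed

end
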